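(* Let $n\ge 3$ be an integer and let $\{D_I\}_{I\in\binom{[n]}{n-1}}$ be a family of positive real numbers, where $[n]=\{1,\dots,n\}$; write $D_{\hat i}=D_{[n]\setminus\{i\}}$ for $i\in[n]$. (a) There exists a positive-weighted tree $\mathcal T=(T,w)$ with $[n]\subseteq V(T)$ such that $D_{\hat i}(\mathcal T)=D_{\hat i}$ for all $i\in[n]$ if and only if $$(n-2)D_{\hat i}\le \sum_{j\in[n]\setminus\{i\}} D_{\hat j}\quad\text{for every } i\in[n],$$ and at most one of these $n$ inequalities is an equality. (b) There exists a positive-weighted tree $\mathcal T=(T,w)$ such that $[n]$ is contained in the set of leaves of $T$ and $D_{\hat i}(\mathcal T)=D_{\hat i}$ for all $i\in[n]$ if and only if $$(n-2)D_{\hat i}< \sum_{j\in[n]\setminus\{i\}} D_{\hat j}\quad\text{for every } i\in[n].$$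
   Context: All graphs are simple and finite. A positive-weighted graph $\mathcal G=(G,w)$ is a graph $G$ with a function $w:E(G)\to\mathbb R_{>0}$; for a subgraph $G'$, $w(G')$ is the sum of the weights of the edges of $G'$. For distinct vertices $i_1,\dots,i_k$ of $G$, $D_{\{i_1,\dots,i_k\}}(\mathcal G)$ is the minimum of $w(R)$ over all connected subgraphs $R$ of $G$ whose vertex set contains $i_1,\dots,i_k$. For a set $I\subseteq V(G)$ we write $D_I(\mathcal G)$ accordingly, and $D_{\hat i}(\mathcal G)=D_{[n]\setminus\{i\}}(\mathcal G)$. *)

theory Defs
  imports Complex_Main
begin

definition simple_graph :: "'v set \<Rightarrow> 'v set set \<Rightarrow> bool" where
  "simple_graph V E \<longleftrightarrow> finite V \<and>
     (\<forall>e\<in>E. \<exists>u v. u \<noteq> v \<and> u \<in> V \<and> v \<in> V \<and> e = {u, v})"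

definition adj :: "'v set set \<Rightarrow> 'v \<Rightarrow> 'v \<Rightarrow> bool" where
  "adj E u v \<longleftrightarrow> {u, v} \<in> E"

definition connected_graph :: "'v set \<Rightarrow> 'v set set \<Rightarrow> bool" where
  "connected_graph V E \<longleftrightarrow> simple_graph V E \<and> V \<noteq> {} \<and>
     (\<forall>u\<in>V. \<forall>v\<in>V. (adj E)\<^sup>*\<^sup>* u v)"

definition is_cycle :: "'v set set \<Rightarrow> 'v list \<Rightarrow> bool" where
  "is_cycle E vs \<longleftrightarrow> length vs \<ge> 3 \<and> distinct vs \<and>
     (\<forall>i < length vs. {vs ! i, vs ! ((i + 1) mod length vs)} \<in> E)"

definition is_tree :: "'v set \<Rightarrow> 'v set set \<Rightarrow> bool" where
  "is_tree V E \<longleftrightarrow> connected_graph V E \<and> \<not> (\<exists>vs. is_cycle E vs)"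

definition subgraph :: "'v set \<Rightarrow> 'v set set \<Rightarrow> 'v set \<Rightarrow> 'v set set \<Rightarrow> bool" where
  "subgraph V' E' V E \<longleftrightarrow> V' \<subseteq> V \<and> E' \<subseteq> E \<and> (\<forall>e\<in>E'. e \<subseteq> V')"

definition Dsub :: "'v set \<Rightarrow> 'v set set \<Rightarrow> ('v set \<Rightarrow> real) \<Rightarrow> 'v set \<Rightarrow> real" where
  "Dsub V E w I = Inf {sum w E' | V' E'. subgraph V' E' V E \<and> connected_graph V' E' \<and> I \<subseteq> V'}"

definition is_leaf :: "'v set set \<Rightarrow> 'v \<Rightarrow> bool" where
  "is_leaf E v \<longleftrightarrow> card {e \<in> E. v \<in> e} = 1"

end

theory Submission
  imports Defs
begin


definition walk :: "'v set set \<Rightarrow> 'v list \<Rightarrow> bool" where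
  "walk E xs \<longleftrightarrow> (\<forall>p. Suc p < length xs \<longrightarrow> {xs!p, xs!Suc p} \<in> E)"

definition spath :: "'v set set \<Rightarrow> 'v list \<Rightarrow> 'v \<Rightarrow> 'v \<Rightarrow> bool" where
  "spath E xs a b \<longleftrightarrow> xs \<noteq> [] \<and> hd xs = a \<and> last xs = b \<and> distinct xs \<and> walk E xs"

definition wedges :: "'v list \<Rightarrow> 'v set set" where
  "wedges xs = {{xs!p, xs!Suc p} | p. Suc p < length xs}"

lemma adj_sym: "adj E a b = adj E b a"
  by (simp add: adj_def insert_commute)

lemma rtr_sym: "(adj E)\<^sup>*\<^sup>* a b \<Longrightarrow> (adj E)\<^sup>*\<^sup>* b a"
proof (induction rule: rtranclp_induct)
  case base then show ?case by simp
next
  case (step y z)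
  have "adj E z y" using step(2) adj_sym by metis
  then show ?case using converse_rtranclp_into_rtranclp[OF _ step.IH] by blast
qed

lemma walk_reach:
  assumes "\<forall>p. k \<le> p \<longrightarrow> p < l \<longrightarrow> {xs!p, xs!Suc p} \<in> E'" "k \<le> l"
  shows "(adj E')\<^sup>*\<^sup>* (xs!k) (xs!l)"
  using assms
proof (induction l)
  case 0 then show ?case by simp
next
  case (Suc l)
  show ?case
  proof (cases "k = Suc l")
    case True then show ?thesis by simp
  next
    case False
    then have "k \<le> l" using Suc by simp
    then have "(adj E')\<^sup>*\<^sup>* (xs!k) (xs!l)" using Suc by simp
    moreover have "adj E' (xs!l) (xs!Suc l)" using Suc(2) \<open>k \<le> l\<close> by (simp add: adj_def)
    ultimately show ?thesis by (rule rtranclp.rtrancl_into_rtrancl)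
  qed
qed

lemma reach_spath: "(adj E)\<^sup>*\<^sup>* a b \<Longrightarrow> \<exists>xs. spath E xs a b"
proof (induction rule: converse_rtranclp_induct)
  case base
  show ?case by (rule exI[of _ "[b]"]) (simp add: spath_def walk_def)
next
  case (step a y)
  then obtain ys where ys: "spath E ys y b" by blast
  show ?case
  proof (cases "a \<in> set ys")
    case True
    then obtain k where k: "k < length ys" "ys!k = a" by (metis in_set_conv_nth)
    have "spath E (drop k ys) a b"
      using ys k unfolding spath_def walk_def
      by (auto simp: hd_drop_conv_nth)
    then show ?thesis by blast
  next
    case False
    have "spath E (a # ys) a b"
      using ys False step(1) unfolding spath_def walk_def adj_def
      apply (auto simp: nth_Cons split: nat.splits)
      by (metis hd_conv_nth length_greater_0_conv)
    then show ?thesis by blast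
  qed
qed

lemma spath_reach: "spath E xs a b \<Longrightarrow> (adj E)\<^sup>*\<^sup>* a b"
proof -
  assume s: "spath E xs a b"
  have "(adj E)\<^sup>*\<^sup>* (xs!0) (xs!(length xs - 1))"
    by (rule walk_reach) (use s in \<open>auto simp: spath_def walk_def\<close>)
  then show ?thesis using s unfolding spath_def by (metis hd_conv_nth last_conv_nth One_nat_def)
qed

lemma spath_len2: "spath E xs a b \<Longrightarrow> a \<noteq> b \<Longrightarrow> length xs \<ge> 2"
proof (rule ccontr)
  assume s: "spath E xs a b" and ab: "a \<noteq> b" and "\<not> length xs \<ge> 2"
  moreover have "length xs \<noteq> 0" using s by (simp add: spath_def)
  ultimately have "length xs = 1" by arith
  then obtain y where "xs = [y]" by (cases xs) auto
  then show False using s ab by (auto simp: spath_def)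
qed

lemma spath_rev: "spath E xs a b \<Longrightarrow> spath E (rev xs) b a"
  unfolding spath_def walk_def
  apply (auto simp: hd_rev last_rev rev_nth)
  subgoal for p
    apply (drule spec[of _ "length xs - Suc (Suc p)"])
    by (auto simp: insert_commute Suc_diff_Suc)
  done

lemma tree_finite: "is_tree V E \<Longrightarrow> finite E"
proof -
  assume t: "is_tree V E"
  then have s: "simple_graph V E" by (simp add: is_tree_def connected_graph_def)
  then have "E \<subseteq> Pow V" unfolding simple_graph_def by auto
  moreover have "finite V" using s by (simp add: simple_graph_def)
  ultimately show ?thesis using finite_subset by (metis finite_Pow_iff)
qed

lemma bridge:
  assumes t: "is_tree V E" and e: "{a,b} \<in> E" and ab: "a \<noteq> b"
  shows "\<not> (adj (E - {{a,b}}))\<^sup>*\<^sup>* a b"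
proof
  assume "(adj (E - {{a,b}}))\<^sup>*\<^sup>* a b"
  then obtain xs where xs: "spath (E - {{a,b}}) xs a b" by (auto dest: reach_spath)
  have l2: "length xs \<ge> 2" using spath_len2[OF xs ab] .
  have l3: "length xs \<ge> 3"
  proof (rule ccontr)
    assume "\<not> ?thesis"
    then have "length xs = 2" using l2 by simp
    then have "xs!0 = a" "xs!1 = b" using xs unfolding spath_def
      by (auto simp: hd_conv_nth last_conv_nth)
    then show False using xs \<open>length xs = 2\<close> unfolding spath_def walk_def
      by (metis DiffD2 One_nat_def insertI1 lessI numeral_2_eq_2)
  qed
  have "is_cycle E xs"
    unfolding is_cycle_def
  proof (intro conjI allI impI)
    show "3 \<le> length xs" by fact
    show "distinct xs" using xs by (simp add: spath_def)
    fix i assume i: "i < length xs"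
    show "{xs ! i, xs ! ((i + 1) mod length xs)} \<in> E"
    proof (cases "Suc i < length xs")
      case True
      then show ?thesis using xs unfolding spath_def walk_def by auto
    next
      case False
      then have "i = length xs - 1" using i by simp
      have "i + 1 = length xs" using i False by simp
      then have "(i + 1) mod length xs = 0" by simp
      moreover have "xs!i = b" "xs!0 = a" using xs \<open>i = length xs - 1\<close> unfolding spath_def
        by (auto simp: hd_conv_nth last_conv_nth)
      ultimately show ?thesis using e by (simp add: insert_commute)
    qed
  qed
  then show False using t by (auto simp: is_tree_def)
qed

lemma distinct_edge_eq:
  assumes "distinct P" "Suc p < length P" "Suc m < length P" "{P!p, P!Suc p} = {P!m, P!Suc m}"
  shows "p = m"
proof -
  have "P!p = P!m \<and> P!Suc p = P!Suc m \<or> P!p = P!Suc m \<and> P!Suc p = P!m"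
    using assms(4) by (auto simp: doubleton_eq_iff)
  then show ?thesis
  proof
    assume "P!p = P!m \<and> P!Suc p = P!Suc m"
    then show ?thesis using assms(1-3) nth_eq_iff_index_eq by (metis Suc_lessD)
  next
    assume h: "P!p = P!Suc m \<and> P!Suc p = P!m"
    then have "p = Suc m" "Suc p = m" using assms(1-3) nth_eq_iff_index_eq by (metis Suc_lessD)+
    then show ?thesis by simp
  qed
qed

lemma separation:
  assumes t: "is_tree V E" and P: "spath E P i j" and m: "Suc m < length P"
    and r: "(adj (E - {{P!m, P!Suc m}}))\<^sup>*\<^sup>* i j"
  shows False
proof -
  let ?e = "{P!m, P!Suc m}"
  let ?E = "E - {?e}"
  have d: "distinct P" and w: "walk E P" using P by (auto simp: spath_def)
  have edges: "{P!p, P!Suc p} \<in> ?E" if "Suc p < length P" "p \<noteq> m" for p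
    using w that distinct_edge_eq[OF d that(1) m] unfolding walk_def by auto
  have r1: "(adj ?E)\<^sup>*\<^sup>* (P!0) (P!m)"
    by (rule walk_reach) (use edges m in auto)
  have r2: "(adj ?E)\<^sup>*\<^sup>* (P!Suc m) (P!(length P - 1))"
    by (rule walk_reach) (use edges m in auto)
  have "P!0 = i" "P!(length P - 1) = j" using P by (auto simp: spath_def hd_conv_nth last_conv_nth)
  then have "(adj ?E)\<^sup>*\<^sup>* (P!m) (P!Suc m)"
    using rtr_sym[OF r1] r rtr_sym[OF r2] by (metis rtranclp_trans)
  moreover have "?e \<in> E" using w m by (simp add: walk_def)
  moreover have "P!m \<noteq> P!Suc m" using d m by (simp add: nth_eq_iff_index_eq)
  ultimately show False using bridge[OF t] by blast
qed



lemma Dsub_set_finite: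
  assumes "finite E"
  shows "finite {sum w E' | V' E'. subgraph V' E' V E \<and> connected_graph V' E' \<and> I \<subseteq> V'}"
proof -
  have "{sum w E' | V' E'. subgraph V' E' V E \<and> connected_graph V' E' \<and> I \<subseteq> V'} \<subseteq> sum w ` Pow E"
    by (auto simp: subgraph_def)
  then show ?thesis using assms finite_subset by blast
qed

lemma Dsub_le:
  assumes "finite E" "subgraph V' E' V E" "connected_graph V' E'" "I \<subseteq> V'"
  shows "Dsub V E w I \<le> sum w E'"
  unfolding Dsub_def
proof (rule cInf_lower)
  show "sum w E' \<in> {sum w E' | V' E'. subgraph V' E' V E \<and> connected_graph V' E' \<and> I \<subseteq> V'}"
    using assms by blast
  show "bdd_below {sum w E' | V' E'. subgraph V' E' V E \<and> connected_graph V' E' \<and> I \<subseteq> V'}"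
    by (rule bdd_below_finite[OF Dsub_set_finite[OF assms(1)]])
qed

lemma Dsub_attain:
  assumes "finite E" "subgraph V' E' V E" "connected_graph V' E'" "I \<subseteq> V'"
  shows "\<exists>V'' E''. subgraph V'' E'' V E \<and> connected_graph V'' E'' \<and> I \<subseteq> V'' \<and> sum w E'' = Dsub V E w I"
proof -
  let ?S = "{sum w E' | V' E'. subgraph V' E' V E \<and> connected_graph V' E' \<and> I \<subseteq> V'}"
  have "?S \<noteq> {}" using assms by blast
  moreover have fin: "finite ?S" by (rule Dsub_set_finite[OF assms(1)])
  ultimately have "Min ?S \<in> ?S" by (intro Min_in)
  moreover have "Inf ?S = Min ?S" using fin \<open>?S \<noteq> {}\<close> by (rule cInf_eq_Min)
  ultimately have "Inf ?S \<in> ?S" by simp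
  then obtain V'' E'' where "Inf ?S = sum w E''" "subgraph V'' E'' V E" "connected_graph V'' E''" "I \<subseteq> V''"
    by blast
  then show ?thesis unfolding Dsub_def by metis
qed

lemma Dsub_ge:
  assumes "\<exists>V' E'. subgraph V' E' V E \<and> connected_graph V' E' \<and> I \<subseteq> V'"
    and "\<And>V' E'. subgraph V' E' V E \<Longrightarrow> connected_graph V' E' \<Longrightarrow> I \<subseteq> V' \<Longrightarrow> z \<le> sum w E'"
  shows "z \<le> Dsub V E w I"
  unfolding Dsub_def
  by (rule cInf_greatest) (use assms in auto)

lemma conn_edge:
  assumes "connected_graph V' E'" "a \<in> V'" "b \<in> V'" "a \<noteq> b"
  shows "\<exists>y. {a, y} \<in> E'"
proof -
  have "(adj E')\<^sup>*\<^sup>* a b" using assms by (auto simp: connected_graph_def)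
  then show ?thesis using assms(4) by (cases rule: converse_rtranclpE) (auto simp: adj_def)
qed

lemma reach_in_V:
  assumes "(adj E)\<^sup>*\<^sup>* a b" "a \<in> V" "simple_graph V E"
  shows "b \<in> V"
  using assms
proof (induction rule: rtranclp_induct)
  case base then show ?case by simp
next
  case (step y z)
  then have "{y,z} \<in> E" by (simp add: adj_def)
  then show ?case using step(5) unfolding simple_graph_def
    by (metis doubleton_eq_iff)
qed

section \<open>Stars\<close>

definition star_E :: "'v \<Rightarrow> 'v set \<Rightarrow> 'v set set" where
  "star_E c L = (\<lambda>l. {c, l}) ` L"

lemma star_sum:
  assumes "finite J" "J \<subseteq> L" "c \<notin> L"
  shows "sum (\<lambda>e. sum x (e \<inter> L)) (star_E c J) = sum x J"
proof -
  have inj: "inj_on (\<lambda>l. {c, l}) J" by (auto simp: inj_on_def doubleton_eq_iff)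
  have "sum (\<lambda>e. sum x (e \<inter> L)) (star_E c J) = (\<Sum>l\<in>J. sum x ({c,l} \<inter> L))"
    unfolding star_E_def by (simp add: sum.reindex[OF inj])
  also have "\<dots> = (\<Sum>l\<in>J. x l)"
  proof (rule sum.cong[OF refl])
    fix l assume "l \<in> J"
    then have "{c,l} \<inter> L = {l}" using assms by auto
    then show "sum x ({c, l} \<inter> L) = x l" by simp
  qed
  finally show ?thesis .
qed



lemma star_reach:
  assumes "u \<in> insert c J"
  shows "(adj (star_E c J))\<^sup>*\<^sup>* u c"
proof (cases "u = c")
  case True then show ?thesis by simp
next
  case False
  then have "{u, c} \<in> star_E c J" using assms by (auto simp: star_E_def insert_commute)
  then have "adj (star_E c J) u c" by (simp add: adj_def)
  then show ?thesis by (rule r_into_rtranclp)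
qed

lemma star_connected:
  assumes "finite J" "c \<notin> J"
  shows "connected_graph (insert c J) (star_E c J)"
  unfolding connected_graph_def simple_graph_def
proof (intro conjI ballI)
  show "finite (insert c J)" using assms by simp
  show "insert c J \<noteq> {}" by simp
  fix e assume "e \<in> star_E c J"
  then obtain l where l: "l \<in> J" "e = {c, l}" by (auto simp: star_E_def)
  then have "c \<noteq> l" using assms by auto
  then show "\<exists>u v. u \<noteq> v \<and> u \<in> insert c J \<and> v \<in> insert c J \<and> e = {u, v}"
    using l by blast
next
  fix u v assume "u \<in> insert c J" "v \<in> insert c J"
  then show "(adj (star_E c J))\<^sup>*\<^sup>* u v"
    using star_reach rtr_sym rtranclp_trans by metis
qed

lemma star_nocycle: "\<not> is_cycle (star_E c L) vs"
proof
  assume cy: "is_cycle (star_E c L) vs"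
  have ce: "c \<in> e" if "e \<in> star_E c L" for e using that by (auto simp: star_E_def)
  let ?n = "length vs"
  have n: "?n \<ge> 3" and d: "distinct vs" using cy by (auto simp: is_cycle_def)
  have e: "{vs!i, vs!((i+1) mod ?n)} \<in> star_E c L" if "i < ?n" for i
    using cy that by (auto simp: is_cycle_def)
  have m1: "(0+1) mod ?n = 1" "(1+1) mod ?n = 2" using n by auto
  have n0: "0 < ?n" "1 < ?n" "2 < ?n" using n by auto
  have e0: "{vs!0, vs!1} \<in> star_E c L" using e[OF n0(1)] m1(1) by simp
  have e1: "{vs!1, vs!2} \<in> star_E c L" using e[OF n0(2)] m1(2) by simp
  have e2: "{vs!2, vs!((2+1) mod ?n)} \<in> star_E c L" using e[OF n0(3)] by simp
  have c0: "c \<in> {vs!0, vs!1}" using ce[OF e0] .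
  have c1: "c \<in> {vs!1, vs!2}" using ce[OF e1] .
  have c2: "c \<in> {vs!2, vs!((2+1) mod ?n)}" using ce[OF e2] .
  have "(2+1) mod ?n \<noteq> 1" "(2+1) mod ?n \<noteq> 2" "(2+1) mod ?n < ?n"
    using n by (auto simp: mod_if)
  then have "vs!((2+1) mod ?n) \<noteq> vs!1" "vs!((2+1) mod ?n) \<noteq> vs!2"
    using d n by (auto simp: nth_eq_iff_index_eq)
  moreover have "vs!0 \<noteq> vs!1" using nth_eq_iff_index_eq[OF d n0(1) n0(2)] by simp
  moreover have "vs!1 \<noteq> vs!2" using nth_eq_iff_index_eq[OF d n0(2) n0(3)] by simp
  moreover have "vs!0 \<noteq> vs!2" using nth_eq_iff_index_eq[OF d n0(1) n0(3)] by simp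
  ultimately show False using c0 c1 c2 by auto
qed

lemma star_tree:
  assumes "finite L" "c \<notin> L"
  shows "is_tree (insert c L) (star_E c L)"
  using star_connected[OF assms] star_nocycle[of c L] by (auto simp: is_tree_def)

lemma star_leaf:
  assumes "l \<in> L" "c \<notin> L"
  shows "is_leaf (star_E c L) l"
proof -
  have "{e \<in> star_E c L. l \<in> e} = {{c,l}}" using assms by (auto simp: star_E_def)
  then show ?thesis by (simp add: is_leaf_def)
qed

lemma star_Dsub:
  assumes L: "finite L" "c \<notin> L" and x: "\<forall>l\<in>L. x l \<ge> 0"
    and A: "A \<subseteq> insert c L" "card A \<ge> 2"
  shows "Dsub (insert c L) (star_E c L) (\<lambda>e. sum x (e \<inter> L)) A = sum x (A \<inter> L)"
proof (rule antisym)
  have fE: "finite (star_E c L)" using L by (simp add: star_E_def)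
  have sub: "subgraph (insert c (A \<inter> L)) (star_E c (A \<inter> L)) (insert c L) (star_E c L)"
    by (auto simp: subgraph_def star_E_def)
  have con: "connected_graph (insert c (A \<inter> L)) (star_E c (A \<inter> L))"
    using L by (intro star_connected) auto
  have AV: "A \<subseteq> insert c (A \<inter> L)" using A by auto
  have sm: "sum (\<lambda>e. sum x (e \<inter> L)) (star_E c (A \<inter> L)) = sum x (A \<inter> L)"
    using L by (intro star_sum) auto
  show "Dsub (insert c L) (star_E c L) (\<lambda>e. sum x (e \<inter> L)) A \<le> sum x (A \<inter> L)"
    using Dsub_le[OF fE sub con AV, of "\<lambda>e. sum x (e \<inter> L)"] sm by simp
  show "sum x (A \<inter> L) \<le> Dsub (insert c L) (star_E c L) (\<lambda>e. sum x (e \<inter> L)) A"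
  proof (rule Dsub_ge)
    show "\<exists>V' E'. subgraph V' E' (insert c L) (star_E c L) \<and> connected_graph V' E' \<and> A \<subseteq> V'"
      using sub con AV by blast
    fix V' E' assume s: "subgraph V' E' (insert c L) (star_E c L)" and cg: "connected_graph V' E'"
      and AV': "A \<subseteq> V'"
    have fA: "finite A" using A(2) card.infinite by fastforce
    have incl: "star_E c (A \<inter> L) \<subseteq> E'"
    proof
      fix e assume "e \<in> star_E c (A \<inter> L)"
      then obtain l where l: "l \<in> A" "l \<in> L" "e = {c,l}" by (auto simp: star_E_def)
      have "card (A - {l}) \<ge> 1" using A(2) fA l by (simp add: card_Diff_singleton)
      then obtain m where m: "m \<in> A" "m \<noteq> l"
        by (metis Diff_eq_empty_iff card_0_eq fA finite_Diff insert_Diff insert_subset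
            not_one_le_zero subsetI subset_antisym)
      obtain y where y: "{l, y} \<in> E'" using conn_edge[OF cg, of l m] AV' l m by auto
      then have "{l,y} \<in> star_E c L" using s by (auto simp: subgraph_def)
      then have "{l,y} = {c,l}" using l L by (auto simp: star_E_def doubleton_eq_iff)
      then show "e \<in> E'" using y l by simp
    qed
    have fE': "finite E'" using s fE by (auto simp: subgraph_def intro: finite_subset)
    have nn: "\<forall>e\<in>E'. 0 \<le> sum x (e \<inter> L)" using x by (auto intro: sum_nonneg)
    show "sum x (A \<inter> L) \<le> sum (\<lambda>e. sum x (e \<inter> L)) E'"
    proof -
      have "sum (\<lambda>e. sum x (e \<inter> L)) (star_E c (A \<inter> L)) \<le> sum (\<lambda>e. sum x (e \<inter> L)) E'"
        by (rule sum_mono2[OF fE' incl]) (use nn in blast)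
      then show ?thesis using sm by simp
    qed
  qed
qed



locale setting =
  fixes V :: "'v set" and E w N VR ER
  assumes tree: "is_tree V E" and wpos: "\<forall>e\<in>E. w e > 0" and NV: "N \<subseteq> V"
    and finN: "finite N" and c3: "card N \<ge> 3"
    and R: "\<forall>k\<in>N. subgraph (VR k) (ER k) V E \<and> connected_graph (VR k) (ER k) \<and> N - {k} \<subseteq> VR k
               \<and> sum w (ER k) = Dsub V E w (N - {k})"
begin

lemma finE: "finite E" using tree_finite[OF tree] .

lemma sg: "simple_graph V E" using tree by (simp add: is_tree_def connected_graph_def)

lemma reachV: "u \<in> V \<Longrightarrow> v \<in> V \<Longrightarrow> (adj E)\<^sup>*\<^sup>* u v"
  using tree by (simp add: is_tree_def connected_graph_def)

lemma ER_sub: "k \<in> N \<Longrightarrow> ER k \<subseteq> E" using R by (auto simp: subgraph_def)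

lemma key:
  assumes P: "spath E P i j" and p: "Suc p < length P" and ij: "i \<in> N" "j \<in> N"
    and k: "k \<in> N" "k \<noteq> i" "k \<noteq> j"
  shows "{P!p, P!Suc p} \<in> ER k"
proof (rule ccontr)
  assume ne: "{P!p, P!Suc p} \<notin> ER k"
  have "i \<in> VR k" "j \<in> VR k" using R k ij by auto
  then have rr: "(adj (ER k))\<^sup>*\<^sup>* i j" using R k by (auto simp: connected_graph_def)
  have le: "adj (ER k) \<le> adj (E - {{P!p, P!Suc p}})"
    using ER_sub[OF k(1)] ne by (auto simp: adj_def)
  have "(adj (E - {{P!p, P!Suc p}}))\<^sup>*\<^sup>* i j" using predicate2D[OF rtranclp_mono[OF le] rr] .
  then show False using separation[OF tree P p] by blast
qed

lemma main:
  assumes i: "i \<in> N" and j0: "j0 \<in> N" "j0 \<noteq> i" and P: "spath E P i j0"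
  shows "real (card N - 2) * Dsub V E w (N - {i}) \<le> (\<Sum>k\<in>N - {i}. Dsub V E w (N - {k}))"
    and "(\<exists>p. Suc p < length P \<and> {P!p, P!Suc p} \<in> ER j0) \<Longrightarrow>
         real (card N - 2) * Dsub V E w (N - {i}) < (\<Sum>k\<in>N - {i}. Dsub V E w (N - {k}))"
proof -
  define PP where "PP j = (if j = j0 then P else SOME Q. spath E Q i j)" for j
  have PP: "spath E (PP j) i j" if "j \<in> N" for j
  proof (cases "j = j0")
    case True then show ?thesis using P by (simp add: PP_def)
  next
    case False
    have "(adj E)\<^sup>*\<^sup>* i j" using reachV NV i that by auto
    then have "\<exists>Q. spath E Q i j" by (rule reach_spath)
    then show ?thesis using False by (simp add: PP_def) (rule someI_ex)
  qed
  define F where "F = (\<Union>j\<in>N - {i}. wedges (PP j))"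
  define VF where "VF = (\<Union>j\<in>N - {i}. set (PP j))"
  have FE: "F \<subseteq> E" using PP unfolding F_def wedges_def spath_def walk_def by blast
  have finF: "finite F" using FE finE finite_subset by blast
  have nn: "\<And>e. e \<in> E \<Longrightarrow> 0 \<le> w e" using wpos by (simp add: less_imp_le)
  have i_hd: "PP j ! 0 = i" if "j \<in> N" for j
    using PP[OF that] unfolding spath_def by (metis hd_conv_nth)
  have reachF: "(adj F)\<^sup>*\<^sup>* i u" if uVF: "u \<in> VF" for u
  proof -
    obtain j where j: "j \<in> N - {i}" "u \<in> set (PP j)" using uVF VF_def by auto
    then obtain q where q: "q < length (PP j)" "PP j ! q = u" by (metis in_set_conv_nth)
    have inF: "{PP j ! p, PP j ! Suc p} \<in> F" if "p < q" for p
    proof -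
      have "{PP j ! p, PP j ! Suc p} \<in> wedges (PP j)" using that q unfolding wedges_def by auto
      then show ?thesis using j unfolding F_def by blast
    qed
    have "(adj F)\<^sup>*\<^sup>* (PP j ! 0) (PP j ! q)"
      by (rule walk_reach) (use inF in auto)
    then show ?thesis using i_hd j q by auto
  qed
  have VFV: "VF \<subseteq> V"
  proof
    fix u assume "u \<in> VF"
    then have r: "(adj F)\<^sup>*\<^sup>* i u" by (rule reachF)
    have "adj F \<le> adj E" using FE by (auto simp: adj_def)
    have "(adj E)\<^sup>*\<^sup>* i u" using predicate2D[OF rtranclp_mono[OF \<open>adj F \<le> adj E\<close>] r] .
    moreover have iV: "i \<in> V" using NV i by blast
    ultimately show "u \<in> V" using reach_in_V[OF _ _ sg] by blast
  qed
  have NVF: "N - {i} \<subseteq> VF"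
  proof
    fix j assume j: "j \<in> N - {i}"
    then have "j = last (PP j)" "PP j \<noteq> []" using PP by (auto simp: spath_def)
    then show "j \<in> VF" using j unfolding VF_def by (metis UN_iff last_in_set)
  qed
  have sub: "subgraph VF F V E"
    unfolding subgraph_def
  proof (intro conjI ballI)
    show "VF \<subseteq> V" by fact
    show "F \<subseteq> E" by fact
    fix e assume "e \<in> F"
    then show "e \<subseteq> VF" unfolding F_def VF_def wedges_def by auto
  qed
  have con: "connected_graph VF F"
    unfolding connected_graph_def simple_graph_def
  proof (intro conjI ballI)
    show "finite VF" using finN by (simp add: VF_def)
    obtain j where "j \<in> N - {i}" using j0 by blast
    then show "VF \<noteq> {}" using NVF by blast
    fix e assume "e \<in> F"
    then obtain j p where jp: "j \<in> N - {i}" "Suc p < length (PP j)" "e = {PP j ! p, PP j ! Suc p}"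
      unfolding F_def wedges_def by auto
    have "PP j ! p \<noteq> PP j ! Suc p" using PP jp by (simp add: spath_def nth_eq_iff_index_eq)
    moreover have "PP j ! p \<in> set (PP j)" "PP j ! Suc p \<in> set (PP j)" using jp(2) by simp_all
    then have "PP j ! p \<in> VF" "PP j ! Suc p \<in> VF" using jp(1) unfolding VF_def by blast+
    ultimately show "\<exists>u v. u \<noteq> v \<and> u \<in> VF \<and> v \<in> VF \<and> e = {u, v}" using jp by blast
  next
    fix u v assume "u \<in> VF" "v \<in> VF"
    then have "(adj F)\<^sup>*\<^sup>* i u" "(adj F)\<^sup>*\<^sup>* i v" using reachF by auto
    then show "(adj F)\<^sup>*\<^sup>* u v" by (meson rtranclp_trans rtr_sym)
  qed
  have DF: "Dsub V E w (N - {i}) \<le> sum w F" using Dsub_le[OF finE sub con NVF] .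
  define c where "c e = card {k \<in> N - {i}. e \<in> ER k}" for e
  have cge: "card N - 2 \<le> c e" if "e \<in> F" for e
  proof -
    obtain j p where jp: "j \<in> N - {i}" "Suc p < length (PP j)" "e = {PP j ! p, PP j ! Suc p}"
      using \<open>e \<in> F\<close> unfolding F_def wedges_def by auto
    have "N - {i} - {j} \<subseteq> {k \<in> N - {i}. e \<in> ER k}"
      using key[OF PP[of j] jp(2) i] jp by auto
    then have "card (N - {i} - {j}) \<le> c e" unfolding c_def by (intro card_mono) (use finN in auto)
    moreover have "card (N - {i} - {j}) = card N - 2" using jp i finN
      by (simp add: card_Diff_singleton)
    ultimately show ?thesis by simp
  qed
  have chain: "(\<Sum>k\<in>N - {i}. Dsub V E w (N - {k})) \<ge> (\<Sum>e\<in>F. w e * real (c e))"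
  proof -
    have "(\<Sum>k\<in>N - {i}. Dsub V E w (N - {k})) = (\<Sum>k\<in>N - {i}. sum w (ER k))"
      using R by (intro sum.cong) auto
    also have "\<dots> \<ge> (\<Sum>k\<in>N - {i}. sum w (ER k \<inter> F))"
    proof (rule sum_mono)
      fix k assume k: "k \<in> N - {i}"
      have "finite (ER k)" using ER_sub k finE finite_subset by blast
      then show "sum w (ER k \<inter> F) \<le> sum w (ER k)"
        using ER_sub k nn by (intro sum_mono2) auto
    qed
    also have "(\<Sum>k\<in>N - {i}. sum w (ER k \<inter> F)) = (\<Sum>k\<in>N - {i}. \<Sum>e\<in>F. if e \<in> ER k then w e else 0)"
    proof (rule sum.cong[OF refl])
      fix k
      have "ER k \<inter> F = {e \<in> F. e \<in> ER k}" by auto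
      then show "sum w (ER k \<inter> F) = (\<Sum>e\<in>F. if e \<in> ER k then w e else 0)"
        using sum.inter_filter[OF finF, of w "\<lambda>e. e \<in> ER k"] by simp
    qed
    also have "\<dots> = (\<Sum>e\<in>F. \<Sum>k\<in>N - {i}. if e \<in> ER k then w e else 0)"
      by (rule sum.swap)
    also have "\<dots> = (\<Sum>e\<in>F. w e * real (c e))"
    proof (rule sum.cong[OF refl])
      fix e
      have "(\<Sum>k\<in>N - {i}. if e \<in> ER k then w e else 0) = (\<Sum>k\<in>{k \<in> N - {i}. e \<in> ER k}. w e)"
        using sum.inter_filter[of "N - {i}" "\<lambda>_. w e" "\<lambda>k. e \<in> ER k"] finN by simp
      then show "(\<Sum>k\<in>N - {i}. if e \<in> ER k then w e else 0) = w e * real (c e)"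
        by (simp add: c_def mult.commute)
    qed
    finally show ?thesis .
  qed
  have lowF: "(\<Sum>e\<in>F. w e * real (card N - 2)) = real (card N - 2) * sum w F"
    by (simp add: sum_distrib_right mult.commute)
  have step: "(\<Sum>e\<in>F. w e * real (card N - 2)) \<le> (\<Sum>e\<in>F. w e * real (c e))"
    using cge FE nn by (intro sum_mono mult_left_mono) auto
  have DF': "real (card N - 2) * Dsub V E w (N - {i}) \<le> real (card N - 2) * sum w F"
    using DF by (intro mult_left_mono) auto
  show "real (card N - 2) * Dsub V E w (N - {i}) \<le> (\<Sum>k\<in>N - {i}. Dsub V E w (N - {k}))"
    using DF' lowF step chain by linarith
  assume "\<exists>p. Suc p < length P \<and> {P!p, P!Suc p} \<in> ER j0"
  then obtain p where p: "Suc p < length P" "{P!p, P!Suc p} \<in> ER j0" by blast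
  let ?e = "{P!p, P!Suc p}"
  have eF: "?e \<in> F" unfolding F_def wedges_def using p j0 by (auto simp: PP_def)
  have "N - {i} \<subseteq> {k \<in> N - {i}. ?e \<in> ER k}"
  proof
    fix k assume k: "k \<in> N - {i}"
    show "k \<in> {k \<in> N - {i}. ?e \<in> ER k}"
    proof (cases "k = j0")
      case True then show ?thesis using p k by simp
    next
      case False then show ?thesis using key[OF P p(1) i j0(1)] k by auto
    qed
  qed
  then have "card (N - {i}) \<le> c ?e" unfolding c_def by (intro card_mono) (use finN in auto)
  then have ce: "card N - 1 \<le> c ?e" using i finN by (simp add: card_Diff_singleton)
  have strict: "(\<Sum>e\<in>F. w e * real (card N - 2)) < (\<Sum>e\<in>F. w e * real (c e))"
  proof (rule sum_strict_mono_ex1[OF finF])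
    show "\<forall>e\<in>F. w e * real (card N - 2) \<le> w e * real (c e)"
    proof
      fix e assume e: "e \<in> F"
      have "real (card N - 2) \<le> real (c e)" using cge[OF e] by simp
      moreover have "0 \<le> w e" using nn e FE by blast
      ultimately show "w e * real (card N - 2) \<le> w e * real (c e)" by (rule mult_left_mono)
    qed
    have "real (card N - 2) < real (c ?e)" using ce c3 by simp
    moreover have "w ?e > 0" using eF FE wpos by auto
    ultimately show "\<exists>e\<in>F. w e * real (card N - 2) < w e * real (c e)"
      using eF by (intro bexI[of _ ?e]) auto
  qed
  show "real (card N - 2) * Dsub V E w (N - {i}) < (\<Sum>k\<in>N - {i}. Dsub V E w (N - {k}))"
    using DF' lowF strict chain by linarith
qed

end



context setting begin

abbreviation "strict i \<equiv> real (card N - 2) * Dsub V E w (N - {i}) < (\<Sum>k\<in>N - {i}. Dsub V E w (N - {k}))"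

lemma nonstrict:
  assumes i: "i \<in> N"
  shows "real (card N - 2) * Dsub V E w (N - {i}) \<le> (\<Sum>k\<in>N - {i}. Dsub V E w (N - {k}))"
proof -
  have "card (N - {i}) \<ge> 2" using c3 i finN by (simp add: card_Diff_singleton)
  then have "N - {i} \<noteq> {}" by (cases "N - {i} = {}") auto
  then obtain j0 where j0: "j0 \<in> N" "j0 \<noteq> i" by blast
  have "(adj E)\<^sup>*\<^sup>* i j0" using reachV NV i j0 by blast
  then obtain P where "spath E P i j0" by (auto dest: reach_spath)
  then show ?thesis using main(1)[OF i j0] by blast
qed

lemma third:
  assumes "i \<in> N" "j \<in> N"
  shows "\<exists>m\<in>N. m \<noteq> i \<and> m \<noteq> j"
proof -
  have "card (N - {i}) = card N - 1" using assms finN by (simp add: card_Diff_singleton)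
  moreover have "card (N - {i}) - card {j} \<le> card (N - {i} - {j})"
    by (rule diff_card_le_card_Diff) simp
  ultimately have "card (N - {i} - {j}) \<ge> 1" using c3 by simp
  then have "N - {i} - {j} \<noteq> {}" by (cases "N - {i} - {j} = {}") auto
  then show ?thesis by blast
qed

lemma pair:
  assumes i: "i \<in> N" and i': "i' \<in> N" and ne: "i \<noteq> i'"
  shows "strict i \<or> strict i'"
proof -
  have "(adj E)\<^sup>*\<^sup>* i i'" using reachV NV i i' by blast
  then obtain P where P: "spath E P i i'" by (auto dest: reach_spath)
  have Pr: "spath E (rev P) i' i" using spath_rev[OF P] .
  have l2: "length P \<ge> 2" using spath_len2[OF P ne] .
  show ?thesis
  proof (cases "\<exists>p. Suc p < length P \<and> {P!p, P!Suc p} \<in> ER i'")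
    case True then show ?thesis using main(2)[OF i i' ne[symmetric] P] by blast
  next
    case F1: False
    show ?thesis
    proof (cases "\<exists>p. Suc p < length (rev P) \<and> {rev P!p, rev P!Suc p} \<in> ER i")
      case True then show ?thesis using main(2)[OF i' i ne Pr] by blast
    next
      case F2: False
      let ?e = "{P!0, P!Suc 0}"
      have s1: "Suc 0 < length P" using l2 by simp
      have n1: "?e \<notin> ER i'" using F1 s1 by blast
      define q where "q = length P - 2"
      have q: "Suc q < length (rev P)" using l2 by (simp add: q_def)
      have "rev P ! q = P ! Suc 0" "rev P ! Suc q = P ! 0"
        using l2 by (simp_all add: rev_nth q_def Suc_diff_Suc numeral_2_eq_2)
      moreover have "{rev P!q, rev P!Suc q} \<notin> ER i" using F2 q by blast
      ultimately have n2: "?e \<notin> ER i" by (simp add: insert_commute)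
      obtain m where m: "m \<in> N" "m \<noteq> i" "m \<noteq> i'" using third[OF i i'] by blast
      have "i \<in> VR i'" "m \<in> VR i'" using R i' i m ne by auto
      then have r1: "(adj (ER i'))\<^sup>*\<^sup>* i m" using R i' by (auto simp: connected_graph_def)
      have "m \<in> VR i" "i' \<in> VR i" using R i' i m ne by auto
      then have r2: "(adj (ER i))\<^sup>*\<^sup>* m i'" using R i by (auto simp: connected_graph_def)
      have le1: "adj (ER i') \<le> adj (E - {?e})" using ER_sub[OF i'] n1 by (auto simp: adj_def)
      have r1': "(adj (E - {?e}))\<^sup>*\<^sup>* i m" using predicate2D[OF rtranclp_mono[OF le1] r1] .
      have le2: "adj (ER i) \<le> adj (E - {?e})" using ER_sub[OF i] n2 by (auto simp: adj_def)
      have r2': "(adj (E - {?e}))\<^sup>*\<^sup>* m i'" using predicate2D[OF rtranclp_mono[OF le2] r2] .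
      have "(adj (E - {{P!0, P!Suc 0}}))\<^sup>*\<^sup>* i i'" using rtranclp_trans[OF r1' r2'] .
      then have False using separation[OF tree P s1] by blast
      then show ?thesis ..
    qed
  qed
qed

lemma leaf_strict:
  assumes i: "i \<in> N" and lf: "is_leaf E i"
  shows "strict i"
proof -
  have "card (N - {i}) \<ge> 2" using c3 i finN by (simp add: card_Diff_singleton)
  then have "N - {i} \<noteq> {}" by (cases "N - {i} = {}") auto
  then obtain j0 where j0: "j0 \<in> N" "j0 \<noteq> i" by blast
  have "(adj E)\<^sup>*\<^sup>* i j0" using reachV NV i j0 by blast
  then obtain P where P: "spath E P i j0" by (auto dest: reach_spath)
  have l2: "length P \<ge> 2" using spath_len2[OF P j0(2)[symmetric]] .
  have P0: "P!0 = i" using P unfolding spath_def by (metis hd_conv_nth)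
  have s1: "Suc 0 < length P" using l2 by simp
  have e0E: "{P!0, P!Suc 0} \<in> E" using P s1 by (simp add: spath_def walk_def)
  obtain m where m: "m \<in> N" "m \<noteq> i" "m \<noteq> j0" using third[OF i j0(1)] by blast
  have "i \<in> VR j0" "m \<in> VR j0" using R i j0 m by auto
  then obtain y where y: "{i, y} \<in> ER j0" using conn_edge[of "VR j0" "ER j0" i m] R j0 m by auto
  have yE: "{i,y} \<in> E" using y ER_sub[OF j0(1)] by auto
  have "card {e \<in> E. i \<in> e} = 1" using lf by (simp add: is_leaf_def)
  then obtain e1 where e1: "{e \<in> E. i \<in> e} = {e1}" by (rule card_1_singletonE)
  have "{i,y} \<in> {e \<in> E. i \<in> e}" using yE by simp
  then have a1: "{i,y} = e1" using e1 by simp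
  have "{P!0, P!Suc 0} \<in> {e \<in> E. i \<in> e}" using e0E P0 by simp
  then have a2: "{P!0, P!Suc 0} = e1" using e1 by simp
  have "{P!0, P!Suc 0} \<in> ER j0" using y a1 a2 by simp
  then have "\<exists>p. Suc p < length P \<and> {P!p, P!Suc p} \<in> ER j0" using s1 by blast
  then show ?thesis using main(2)[OF i j0 P] by blast
qed

end



lemma construct:
  assumes L: "finite L" "c \<notin> L" and NL: "N \<subseteq> insert c L" and c3: "card N \<ge> 3"
    and x: "\<forall>l\<in>L. x l > 0" and s: "\<forall>i\<in>N. sum x ((N - {i}) \<inter> L) = d i"
  shows "\<exists>V E w. is_tree V E \<and> (\<forall>e\<in>E. w e > 0) \<and> N \<subseteq> V \<and> (\<forall>i\<in>L. is_leaf E i) \<and>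
            (\<forall>i\<in>N. Dsub V E w (N - {i}) = d i)"
proof -
  define w where "w = (\<lambda>e. sum x (e \<inter> L))"
  have t: "is_tree (insert c L) (star_E c L)" using star_tree[OF L] .
  have wp: "\<forall>e\<in>star_E c L. w e > 0"
  proof
    fix e assume "e \<in> star_E c L"
    then obtain l where l: "l \<in> L" "e = {c,l}" by (auto simp: star_E_def)
    then have "e \<inter> L = {l}" using L by auto
    then have "w e = x l" by (simp add: w_def)
    moreover have "x l > 0" using x l(1) by blast
    ultimately show "w e > 0" by simp
  qed
  have lf: "\<forall>i\<in>L. is_leaf (star_E c L) i"
  proof
    fix i assume "i \<in> L" then show "is_leaf (star_E c L) i" by (rule star_leaf[OF _ L(2)])
  qed
  have fN: "finite N"
  proof (rule ccontr)
    assume "infinite N" then have "card N = 0" by simp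
    then show False using c3 by simp
  qed
  have Dv: "\<forall>i\<in>N. Dsub (insert c L) (star_E c L) w (N - {i}) = d i"
  proof
    fix i assume i: "i \<in> N"
    have c2: "card (N - {i}) \<ge> 2" using c3 i fN by (simp add: card_Diff_singleton)
    have xn: "\<forall>l\<in>L. x l \<ge> 0" using x by (auto intro: less_imp_le)
    have NL': "N - {i} \<subseteq> insert c L" using NL by blast
    have "Dsub (insert c L) (star_E c L) w (N - {i}) = sum x ((N - {i}) \<inter> L)"
      unfolding w_def by (rule star_Dsub[OF L xn NL' c2])
    then show "Dsub (insert c L) (star_E c L) w (N - {i}) = d i" using s i by simp
  qed
  show ?thesis by (intro exI[of _ "insert c L"] exI[of _ "star_E c L"] exI[of _ w] conjI; fact)
qed

lemma forward_setup:
  assumes t: "is_tree V E" and wp: "\<forall>e\<in>E. w e > 0" and NV: "N \<subseteq> V" and fN: "finite N"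
    and c3: "card N \<ge> 3"
  shows "\<exists>VR ER. setting V E w N VR ER"
proof -
  have sg: "simple_graph V E" using t by (simp add: is_tree_def connected_graph_def)
  have sub: "subgraph V E V E" using sg unfolding subgraph_def simple_graph_def by auto
  have cg: "connected_graph V E" using t by (simp add: is_tree_def)
  have "\<forall>k\<in>N. \<exists>p. subgraph (fst p) (snd p) V E \<and> connected_graph (fst p) (snd p) \<and> N - {k} \<subseteq> fst p
               \<and> sum w (snd p) = Dsub V E w (N - {k})"
  proof
    fix k assume "k \<in> N"
    have "N - {k} \<subseteq> V" using NV by auto
    then obtain V'' E'' where "subgraph V'' E'' V E \<and> connected_graph V'' E'' \<and> N - {k} \<subseteq> V'' \<and> sum w E'' = Dsub V E w (N - {k})"
      using Dsub_attain[OF tree_finite[OF t] sub cg] by blast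
    then show "\<exists>p. subgraph (fst p) (snd p) V E \<and> connected_graph (fst p) (snd p) \<and> N - {k} \<subseteq> fst p
               \<and> sum w (snd p) = Dsub V E w (N - {k})" by (intro exI[of _ "(V'', E'')"]) simp
  qed
  then obtain f where f: "\<forall>k\<in>N. subgraph (fst (f k)) (snd (f k)) V E \<and> connected_graph (fst (f k)) (snd (f k)) \<and> N - {k} \<subseteq> fst (f k)
               \<and> sum w (snd (f k)) = Dsub V E w (N - {k})" by (metis bchoice)
  have "setting V E w N (\<lambda>k. fst (f k)) (\<lambda>k. snd (f k))"
    by (unfold_locales) (use t wp NV fN c3 f in auto)
  then show ?thesis by blast
qed

theorem theorem3p1:
  fixes n :: nat and D :: "nat set \<Rightarrow> real"
  assumes "n \<ge> 3"
    and "\<And>I. I \<subseteq> {1..n} \<Longrightarrow> card I = n - 1 \<Longrightarrow> D I > 0"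
  shows "((\<exists>(V::nat set) E w. is_tree V E \<and> (\<forall>e\<in>E. w e > 0) \<and> {1..n} \<subseteq> V \<and>
             (\<forall>i\<in>{1..n}. Dsub V E w ({1..n} - {i}) = D ({1..n} - {i})))
          \<longleftrightarrow> ((\<forall>i\<in>{1..n}. real (n - 2) * D ({1..n} - {i}) \<le> (\<Sum>j\<in>{1..n} - {i}. D ({1..n} - {j})))
               \<and> card {i\<in>{1..n}. real (n - 2) * D ({1..n} - {i}) = (\<Sum>j\<in>{1..n} - {i}. D ({1..n} - {j}))} \<le> 1))
       \<and> ((\<exists>(V::nat set) E w. is_tree V E \<and> (\<forall>e\<in>E. w e > 0) \<and> {1..n} \<subseteq> V \<and>
             (\<forall>i\<in>{1..n}. is_leaf E i) \<and>
             (\<forall>i\<in>{1..n}. Dsub V E w ({1..n} - {i}) = D ({1..n} - {i})))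
          \<longleftrightarrow> (\<forall>i\<in>{1..n}. real (n - 2) * D ({1..n} - {i}) < (\<Sum>j\<in>{1..n} - {i}. D ({1..n} - {j}))))"
proof -
  define N where "N = {1..n}"
  define d where "d i = D (N - {i})" for i
  have fN: "finite N" and cN: "card N = n" by (simp_all add: N_def)
  have c3: "card N \<ge> 3" using assms(1) cN by simp
  define S where "S = (\<Sum>k\<in>N. d k)"
  define x where "x k = S / real (n - 1) - d k" for k
  have n1: "real (n - 1) = real n - 1" "real (n - 2) = real n - 2" using assms(1) by auto
  have sd: "(\<Sum>j\<in>N - {i}. d j) = S - d i" if "i \<in> N" for i
    using sum_diff1[OF fN, of d i] that by (simp add: S_def)
  have sx: "sum x (N - {i}) = d i" if i: "i \<in> N" for i
  proof -
    have "sum x (N - {i}) = real (card (N - {i})) * (S / real (n - 1)) - (\<Sum>j\<in>N - {i}. d j)"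
      by (simp add: x_def sum_subtractf)
    also have "card (N - {i}) = n - 1" using cN i fN by (simp add: card_Diff_singleton)
    finally show ?thesis using sd[OF i] assms(1) by simp
  qed
  have ineq_x: "real (n - 2) * d i \<le> (\<Sum>j\<in>N - {i}. d j) \<longleftrightarrow> 0 \<le> x i" if i: "i \<in> N" for i
  proof -
    have "real (n - 2) * d i \<le> (\<Sum>j\<in>N - {i}. d j) \<longleftrightarrow> real (n - 1) * d i \<le> S"
      using sd[OF i] n1 by (auto simp: algebra_simps)
    also have "\<dots> \<longleftrightarrow> d i \<le> S / real (n - 1)" using assms(1)
      by (simp add: pos_le_divide_eq mult.commute)
    finally show ?thesis by (simp add: x_def)
  qed
  have eq_x: "real (n - 2) * d i = (\<Sum>j\<in>N - {i}. d j) \<longleftrightarrow> x i = 0" if i: "i \<in> N" for i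
  proof -
    have "real (n - 2) * d i = (\<Sum>j\<in>N - {i}. d j) \<longleftrightarrow> real (n - 1) * d i = S"
      using sd[OF i] n1 by (auto simp: algebra_simps)
    also have "\<dots> \<longleftrightarrow> d i = S / real (n - 1)" using assms(1)
      by (auto simp: field_simps)
    finally show ?thesis by (auto simp: x_def)
  qed
  have lt_x: "real (n - 2) * d i < (\<Sum>j\<in>N - {i}. d j) \<longleftrightarrow> 0 < x i" if i: "i \<in> N" for i
    using ineq_x[OF i] eq_x[OF i] by auto
  have fwd: "(\<Sum>k\<in>N - {i}. Dsub V E w (N - {k})) = (\<Sum>k\<in>N - {i}. d k)"
    if "\<forall>i\<in>N. Dsub V E w (N - {i}) = d i" for V E w i
    using that by (intro sum.cong) (auto simp: d_def)
  have 0: "(0::nat) \<notin> N" by (simp add: N_def)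
  have A: "(\<exists>(V::nat set) E w. is_tree V E \<and> (\<forall>e\<in>E. w e > 0) \<and> N \<subseteq> V \<and>
             (\<forall>i\<in>N. Dsub V E w (N - {i}) = d i))
          \<longleftrightarrow> ((\<forall>i\<in>N. real (n - 2) * d i \<le> (\<Sum>j\<in>N - {i}. d j))
               \<and> card {i\<in>N. real (n - 2) * d i = (\<Sum>j\<in>N - {i}. d j)} \<le> 1)"
  proof
    assume "\<exists>(V::nat set) E w. is_tree V E \<and> (\<forall>e\<in>E. w e > 0) \<and> N \<subseteq> V \<and>
             (\<forall>i\<in>N. Dsub V E w (N - {i}) = d i)"
    then obtain V :: "nat set" and E w where t: "is_tree V E" "\<forall>e\<in>E. w e > 0" "N \<subseteq> V"
      and Dv: "\<forall>i\<in>N. Dsub V E w (N - {i}) = d i" by blast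
    obtain VR ER where st: "setting V E w N VR ER" using forward_setup[OF t fN c3] by blast
    have "\<forall>i\<in>N. real (n - 2) * d i \<le> (\<Sum>j\<in>N - {i}. d j)"
      using setting.nonstrict[OF st] fwd[OF Dv] Dv cN by auto
    moreover have "card {i\<in>N. real (n - 2) * d i = (\<Sum>j\<in>N - {i}. d j)} \<le> 1"
    proof -
      have "\<forall>a1\<in>{i\<in>N. real (n - 2) * d i = (\<Sum>j\<in>N - {i}. d j)}.
            \<forall>a2\<in>{i\<in>N. real (n - 2) * d i = (\<Sum>j\<in>N - {i}. d j)}. a1 = a2"
      proof (intro ballI, rule ccontr)
        fix a1 a2 assume a1: "a1 \<in> {i\<in>N. real (n - 2) * d i = (\<Sum>j\<in>N - {i}. d j)}"
          and a2: "a2 \<in> {i\<in>N. real (n - 2) * d i = (\<Sum>j\<in>N - {i}. d j)}" and ne: "a1 \<noteq> a2"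
        show False using setting.pair[OF st _ _ ne] a1 a2 fwd[OF Dv] Dv cN by auto
      qed
      then show ?thesis using card_le_Suc0_iff_eq[of "{i\<in>N. real (n - 2) * d i = (\<Sum>j\<in>N - {i}. d j)}"] fN
        by simp
    qed
    ultimately show "(\<forall>i\<in>N. real (n - 2) * d i \<le> (\<Sum>j\<in>N - {i}. d j))
               \<and> card {i\<in>N. real (n - 2) * d i = (\<Sum>j\<in>N - {i}. d j)} \<le> 1" by blast
  next
    assume h: "(\<forall>i\<in>N. real (n - 2) * d i \<le> (\<Sum>j\<in>N - {i}. d j))
               \<and> card {i\<in>N. real (n - 2) * d i = (\<Sum>j\<in>N - {i}. d j)} \<le> 1"
    let ?Q = "{i\<in>N. real (n - 2) * d i = (\<Sum>j\<in>N - {i}. d j)}"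
    have xnn: "\<forall>i\<in>N. 0 \<le> x i" using h ineq_x by blast
    have "\<forall>a1\<in>?Q. \<forall>a2\<in>?Q. a1 = a2" using h card_le_Suc0_iff_eq[of ?Q] fN by simp
    then have "?Q = {} \<or> (\<exists>i0. ?Q = {i0})" by blast
    then show "\<exists>(V::nat set) E w. is_tree V E \<and> (\<forall>e\<in>E. w e > 0) \<and> N \<subseteq> V \<and>
             (\<forall>i\<in>N. Dsub V E w (N - {i}) = d i)"
    proof
      assume Q: "?Q = {}"
      have "\<forall>l\<in>N. x l > 0" using xnn Q eq_x by (metis (mono_tags, lifting) empty_Collect_eq less_eq_real_def)
      then have "\<exists>(V::nat set) E w. is_tree V E \<and> (\<forall>e\<in>E. w e > 0) \<and> N \<subseteq> V \<and> (\<forall>i\<in>N. is_leaf E i) \<and>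
            (\<forall>i\<in>N. Dsub V E w (N - {i}) = d i)"
        using construct[OF fN 0 _ c3, of x d] sx by (auto simp: Int_absorb2)
      then show ?thesis by blast
    next
      assume "\<exists>i0. ?Q = {i0}"
      then obtain i0 where Q: "?Q = {i0}" by blast
      then have i0: "i0 \<in> N" "x i0 = 0" using eq_x by auto
      have pos: "\<forall>l\<in>N - {i0}. x l > 0"
      proof
        fix l assume l: "l \<in> N - {i0}"
        then have "l \<notin> ?Q" using Q by auto
        then show "x l > 0" using l xnn eq_x by (metis (mono_tags, lifting) DiffD1 mem_Collect_eq less_eq_real_def)
      qed
      have s: "\<forall>i\<in>N. sum x ((N - {i}) \<inter> (N - {i0})) = d i"
      proof
        fix i assume i: "i \<in> N"
        have "(N - {i}) \<inter> (N - {i0}) = N - {i} - {i0}" by auto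
        moreover have "sum x (N - {i} - {i0}) = sum x (N - {i})"
          using i0 fN by (cases "i0 \<in> N - {i}") (simp_all add: sum_diff1)
        ultimately show "sum x ((N - {i}) \<inter> (N - {i0})) = d i" using sx[OF i] by simp
      qed
      have "N \<subseteq> insert i0 (N - {i0})" by auto
      then have "\<exists>(V::nat set) E w. is_tree V E \<and> (\<forall>e\<in>E. w e > 0) \<and> N \<subseteq> V \<and> (\<forall>i\<in>N - {i0}. is_leaf E i) \<and>
            (\<forall>i\<in>N. Dsub V E w (N - {i}) = d i)"
        using construct[of "N - {i0}" i0 N x d] fN c3 pos s by auto
      then show ?thesis by blast
    qed
  qed
  have B: "(\<exists>(V::nat set) E w. is_tree V E \<and> (\<forall>e\<in>E. w e > 0) \<and> N \<subseteq> V \<and>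
             (\<forall>i\<in>N. is_leaf E i) \<and>
             (\<forall>i\<in>N. Dsub V E w (N - {i}) = d i))
          \<longleftrightarrow> (\<forall>i\<in>N. real (n - 2) * d i < (\<Sum>j\<in>N - {i}. d j))"
  proof
    assume "\<exists>(V::nat set) E w. is_tree V E \<and> (\<forall>e\<in>E. w e > 0) \<and> N \<subseteq> V \<and>
             (\<forall>i\<in>N. is_leaf E i) \<and> (\<forall>i\<in>N. Dsub V E w (N - {i}) = d i)"
    then obtain V :: "nat set" and E w where t: "is_tree V E" "\<forall>e\<in>E. w e > 0" "N \<subseteq> V"
      and lf: "\<forall>i\<in>N. is_leaf E i"
      and Dv: "\<forall>i\<in>N. Dsub V E w (N - {i}) = d i" by blast
    obtain VR ER where st: "setting V E w N VR ER" using forward_setup[OF t fN c3] by blast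
    show "\<forall>i\<in>N. real (n - 2) * d i < (\<Sum>j\<in>N - {i}. d j)"
      using setting.leaf_strict[OF st] lf fwd[OF Dv] Dv cN by auto
  next
    assume h: "\<forall>i\<in>N. real (n - 2) * d i < (\<Sum>j\<in>N - {i}. d j)"
    then have "\<forall>l\<in>N. x l > 0" using lt_x by blast
    then show "\<exists>(V::nat set) E w. is_tree V E \<and> (\<forall>e\<in>E. w e > 0) \<and> N \<subseteq> V \<and> (\<forall>i\<in>N. is_leaf E i) \<and>
            (\<forall>i\<in>N. Dsub V E w (N - {i}) = d i)"
      using construct[OF fN 0 _ c3, of x d] sx by (auto simp: Int_absorb2)
  qed
  show ?thesis using A B unfolding N_def d_def by blast
qed

end
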